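(* Let $\mathbf{m}=(m_i)_{i\in I}$ with $m_i\in\mathbb{Z}_{\ge0}$, $m=\sum_i m_i$, and let $(\mathbf{i},\mathbf{a})\in I^m\times\mathbb{Z}^m$ be an integral pair such that $a_1\le a_2\le\dots\le a_m$ and $\mathbf{i}$ is a rearrangement of $\mathbf{i}_{\mathbf{m}}$. Let $\pi\in S_m$ be the shortest permutation with $\pi(\mathbf{i})=\mathbf{i}_{\mathbf{m}}$. Then $\pi$ is $(\mathbf{i},\mathbf{a})$-admissible.
   Context: $I$ is the vertex set of a finite simple bipartite graph $I=I_{\bar0}\sqcup I_{\bar1}$ (parities $0,1$); every edge is oriented from its even endpoint to its odd endpoint, and $i\leftarrow j$ means there is an oriented edge from $j$ to $i$. Fix a total order on $I$ in which all even vertices precede all odd ones. $\mathbf{i}_{\mathbf{m}}\in I^m$ is the sequence in which the vertices of $I$ appear in this total order, each $i$ repeated $m_i$ times. $(\mathbf{i},\mathbf{a})$ is integral if each $a_k$ is an integer whose residue mod 2 equals the parity of $i_k$. $S_m$ acts on tuples by $\pi(\mathbf{a})=(a_{\pi^{-1}(1)},\dots,a_{\pi^{-1}(m)})$. Distinct indices $k,l$ are not $(\mathbf{i},\mathbf{a})$-switchable if $i_k\leftarrow i_l$ and $a_k=a_l+1$ (checked for the pair in either order); $\pi$ is $(\mathbf{i},\mathbf{a})$-admissible if for every non-switchable pair $k,l$, $\pi(k),\pi(l)$ are in the same relative order as $k,l$. *)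

theory Defs
  imports "HOL-Combinatorics.Permutations"
begin

text \<open>Vertices: a finite set V of a linearly ordered type; parity par v (True = odd);
  E j i means an oriented edge from j to i, i.e. i \<leftarrow> j.\<close>

definition oriented_bipartite :: "'v set \<Rightarrow> ('v \<Rightarrow> bool) \<Rightarrow> ('v \<Rightarrow> 'v \<Rightarrow> bool) \<Rightarrow> bool" where
  "oriented_bipartite V par E \<longleftrightarrow> finite V \<and>
     (\<forall>j i. E j i \<longrightarrow> j \<in> V \<and> i \<in> V \<and> \<not> par j \<and> par i)"

definition evens_first :: "'v::linorder set \<Rightarrow> ('v \<Rightarrow> bool) \<Rightarrow> bool" where
  "evens_first V par \<longleftrightarrow> (\<forall>u\<in>V. \<forall>v\<in>V. \<not> par u \<and> par v \<longrightarrow> u < v)"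

definition seq_m :: "'v::linorder set \<Rightarrow> ('v \<Rightarrow> nat) \<Rightarrow> 'v list" where
  "seq_m V mm = concat (map (\<lambda>v. replicate (mm v) v) (sorted_list_of_set V))"

definition integral_pair :: "('v \<Rightarrow> bool) \<Rightarrow> 'v list \<Rightarrow> int list \<Rightarrow> bool" where
  "integral_pair par is as \<longleftrightarrow> length is = length as \<and>
     (\<forall>k<length is. as ! k mod 2 = (if par (is ! k) then 1 else 0))"

definition perm_act :: "(nat \<Rightarrow> nat) \<Rightarrow> 'a list \<Rightarrow> 'a list" where
  "perm_act p xs = map (\<lambda>k. xs ! inv p k) [0..<length xs]"

definition perm_length :: "nat \<Rightarrow> (nat \<Rightarrow> nat) \<Rightarrow> nat" where
  "perm_length n p = card {(k, l). k < l \<and> l < n \<and> p l < p k}"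

definition not_switchable :: "('v \<Rightarrow> 'v \<Rightarrow> bool) \<Rightarrow> 'v list \<Rightarrow> int list \<Rightarrow> nat \<Rightarrow> nat \<Rightarrow> bool" where
  "not_switchable E is as k l \<longleftrightarrow>
     (E (is ! l) (is ! k) \<and> as ! k = as ! l + 1) \<or> (E (is ! k) (is ! l) \<and> as ! l = as ! k + 1)"

definition admissible :: "('v \<Rightarrow> 'v \<Rightarrow> bool) \<Rightarrow> 'v list \<Rightarrow> int list \<Rightarrow> (nat \<Rightarrow> nat) \<Rightarrow> bool" where
  "admissible E is as p \<longleftrightarrow>
     (\<forall>k<length is. \<forall>l<length is. k \<noteq> l \<and> not_switchable E is as k l \<longrightarrow>
        (k < l \<longleftrightarrow> p k < p l))"

end

theory Submission
  imports Defs
begin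

lemma sorted_concat_rep: "sorted xs \<Longrightarrow> sorted (concat (map (\<lambda>v. replicate (f v) v) xs))"
  by (induction xs) (auto simp: sorted_append)

lemma sorted_seq_m: "sorted (seq_m V mm)"
  unfolding seq_m_def by (rule sorted_concat_rep) simp

theorem lemma5p8:
  fixes V :: "'v::linorder set" and par :: "'v \<Rightarrow> bool" and E :: "'v \<Rightarrow> 'v \<Rightarrow> bool"
    and mm :: "'v \<Rightarrow> nat" and "is" :: "'v list" and as :: "int list" and p :: "nat \<Rightarrow> nat"
  assumes "oriented_bipartite V par E"
    and "evens_first V par"
    and "integral_pair par is as"
    and "sorted as"
    and "mset is = mset (seq_m V mm)"
    and "p permutes {0..<length is}"
    and "perm_act p is = seq_m V mm"
    and "\<And>q. q permutes {0..<length is} \<Longrightarrow> perm_act q is = seq_m V mm \<Longrightarrow>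
           perm_length (length is) p \<le> perm_length (length is) q"
  shows "admissible E is as p"
proof -
  let ?s = "seq_m V mm"
  have len: "length ?s = length is" using assms(7) unfolding perm_act_def by (metis length_map length_upt minus_nat.diff_0)
  have lenas: "length as = length is" using assms(3) unfolding integral_pair_def by simp
  have pin: "p j < length is" if "j < length is" for j
    using assms(6) that by (metis atLeastLessThan_iff permutes_in_image zero_le)
  have sp: "?s ! (p j) = is ! j" if "j < length is" for j
  proof -
    have "?s ! (p j) = perm_act p is ! (p j)" using assms(7) by simp
    also have "\<dots> = is ! inv p (p j)" unfolding perm_act_def using pin[OF that] by simp
    also have "inv p (p j) = j" using assms(6) by (simp add: permutes_inverses(2))
    finally show ?thesis .
  qed
  have key: "p l < p k" if "l < length is" "k < length is" "E (is ! l) (is ! k)" for k l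
  proof -
    have "is ! l \<in> V" "is ! k \<in> V" "\<not> par (is ! l)" "par (is ! k)"
      using assms(1) that(3) unfolding oriented_bipartite_def by auto
    hence lt: "is ! l < is ! k" using assms(2) unfolding evens_first_def by auto
    show ?thesis
    proof (rule ccontr)
      assume "\<not> p l < p k"
      hence "?s ! (p k) \<le> ?s ! (p l)"
        using sorted_nth_mono[OF sorted_seq_m[of V mm], of "p k" "p l"] len pin[OF that(1)] by simp
      thus False using sp that lt by simp
    qed
  qed
  have ord: "l < k" if "l < length is" "k < length is" "as ! k = as ! l + 1" for k l
  proof (rule ccontr)
    assume "\<not> l < k"
    hence "as ! k \<le> as ! l" using sorted_nth_mono[OF assms(4), of k l] that lenas by simp
    thus False using that by simp
  qed
  show ?thesis unfolding admissible_def not_switchable_def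
  proof (intro allI impI)
    fix k l assume k: "k < length is" and l: "l < length is"
      and h: "k \<noteq> l \<and> ((E (is ! l) (is ! k) \<and> as ! k = as ! l + 1) \<or> (E (is ! k) (is ! l) \<and> as ! l = as ! k + 1))"
    show "(k < l) = (p k < p l)"
    proof (cases "E (is ! l) (is ! k) \<and> as ! k = as ! l + 1")
      case True
      then show ?thesis using key[OF l k] ord[OF l k] by auto
    next
      case False
      then show ?thesis using h key[OF k l] ord[OF k l] by auto
    qed
  qed
qed

end
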